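(* Let $\mathcal{N}\in\mathbb{C}^{n\times n}$ be Hermitian positive definite. Then the projection $\Pi(P_\sharp,R_\sharp)=P_\sharp(R_\sharp^*AP_\sharp)^{-1}R_\sharp^*A$ is $\mathcal{N}$-orthogonal if and only if $\mathcal{N}$ can be written in the form $\mathcal{N}=V_r^{-*}\widetilde{\mathcal{D}}^*\widetilde{\mathcal{D}}V_r^{-1}$ for some invertible block-diagonal matrix $$\widetilde{\mathcal{D}}=\begin{bmatrix}\mathcal{U}_{cc}&0\\0&\mathcal{U}_{ff}\end{bmatrix},$$ where $\mathcal{U}_{cc}\in\mathbb{C}^{n_c\times n_c}$ and $\mathcal{U}_{ff}\in\mathbb{C}^{n_f\times n_f}$ are upper triangular.
   Context: Let $A,M\in\mathbb{C}^{n\times n}$ be nonsingular with $M^{-1}A$ and $M^{-*}A^*$ diagonalizable. Let $V_r=[\bm v_{r,1},\dots,\bm v_{r,n}]$ and $V_l=[\bm v_{l,1},\dots,\bm v_{l,n}]$ be invertible matrices of right and left generalized eigenvectors of the pencil $(A,M)$, i.e. $AV_r=MV_r\Lambda$ and $V_l^*A=\Lambda V_l^*M$ with $\Lambda=\mathrm{diag}(\lambda_1,\dots,\lambda_n)$, chosen so that $V_l^*AV_r=D_a$ and $V_l^*MV_r=D_m$ are diagonal, and with the eigenvalues ordered so that $|1-\lambda_1|\ge|1-\lambda_2|\ge\cdots\ge|1-\lambda_n|\ge0$. Fix $n_c\in\{1,\dots,n\}$ and $n_f=n-n_c$. $P_\sharp,R_\sharp\in\mathbb{C}^{n\times n_c}$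 are any matrices with $\mathrm{range}(P_\sharp)=\mathrm{span}\{\bm v_{r,1},\dots,\bm v_{r,n_c}\}$ and $\mathrm{range}(R_\sharp)=\mathrm{span}\{\bm v_{l,1},\dots,\bm v_{l,n_c}\}$ (then $R_\sharp^*AP_\sharp$ is invertible). For Hermitian positive definite $\mathcal{N}$, $\langle x,y\rangle_{\mathcal N}=y^*\mathcal N x$; a matrix $Z$ is $\mathcal N$-orthogonal if $\langle Zx,y\rangle_{\mathcal N}=\langle x,Zy\rangle_{\mathcal N}$ for all $x,y\in\mathbb{C}^n$. *)

theory Defs
  imports "Jordan_Normal_Form.Schur_Decomposition"
begin

definition mat_inv :: "complex mat \<Rightarrow> complex mat" where
  "mat_inv B = (SOME C. inverts_mat B C \<and> inverts_mat C B)"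

definition diagonalizable :: "complex mat \<Rightarrow> bool" where
  "diagonalizable B \<longleftrightarrow> (\<exists>D. diagonal_mat D \<and> similar_mat B D)"

definition col_space :: "complex mat \<Rightarrow> complex vec set" where
  "col_space B = (\<lambda>x. B *\<^sub>v x) ` carrier_vec (dim_col B)"

definition first_cols :: "complex mat \<Rightarrow> nat \<Rightarrow> complex mat" where
  "first_cols B k = mat (dim_row B) k (\<lambda>(i,j). B $$ (i,j))"

definition hpd :: "nat \<Rightarrow> complex mat \<Rightarrow> bool" where
  "hpd n N \<longleftrightarrow> N \<in> carrier_mat n n \<and> mat_adjoint N = N \<and>
     (\<forall>x \<in> carrier_vec n. x \<noteq> 0\<^sub>v n \<longrightarrow> Re ((N *\<^sub>v x) \<bullet>c x) > 0)"

definition N_inner :: "complex mat \<Rightarrow> complex vec \<Rightarrow> complex vec \<Rightarrow> complex" where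
  "N_inner N x y = (N *\<^sub>v x) \<bullet>c y"

definition N_orthogonal :: "nat \<Rightarrow> complex mat \<Rightarrow> complex mat \<Rightarrow> bool" where
  "N_orthogonal n N Z \<longleftrightarrow>
     (\<forall>x \<in> carrier_vec n. \<forall>y \<in> carrier_vec n. N_inner N (Z *\<^sub>v x) y = N_inner N x (Z *\<^sub>v y))"

definition proj_Pi :: "complex mat \<Rightarrow> complex mat \<Rightarrow> complex mat \<Rightarrow> complex mat" where
  "proj_Pi A P R = P * mat_inv (mat_adjoint R * A * P) * mat_adjoint R * A"

end

theory Submission
  imports Defs
begin

lemma adj_mat: "mat_adjoint A = mat (dim_col A) (dim_row A) (\<lambda>(i,j). cnj (A $$ (j,i)))"
  by (rule eq_matI, auto simp: mat_adjoint_def mat_of_rows_def)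

lemma adj_carrier[simp]: "(A::complex mat) \<in> carrier_mat n m \<Longrightarrow> mat_adjoint A \<in> carrier_mat m n"
  by (simp add: adj_mat)

lemma adj_dims[simp]: "dim_row (mat_adjoint (A::complex mat)) = dim_col A" "dim_col (mat_adjoint A) = dim_row A"
  by (simp_all add: adj_mat)

lemma adj_index[simp]: "i < dim_col (A::complex mat) \<Longrightarrow> j < dim_row A \<Longrightarrow> mat_adjoint A $$ (i,j) = cnj (A $$ (j,i))"
  by (simp add: adj_mat)

lemma adj_adj[simp]: "mat_adjoint (mat_adjoint (A::complex mat)) = A"
  by (rule eq_matI, auto)

lemma adj_one[simp]: "mat_adjoint (1\<^sub>m n :: complex mat) = 1\<^sub>m n"
  by (rule eq_matI, auto)

lemma adj_mult: assumes "A \<in> carrier_mat n m" "B \<in> carrier_mat m k"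
  shows "mat_adjoint (A * B :: complex mat) = mat_adjoint B * mat_adjoint A"
  using assms by (intro eq_matI, auto simp: scalar_prod_def mult.commute)

lemma adj_vec: assumes M: "(M::complex mat) \<in> carrier_mat n m" and x: "x \<in> carrier_vec m" and y: "y \<in> carrier_vec n"
  shows "(M *\<^sub>v x) \<bullet>c y = x \<bullet>c (mat_adjoint M *\<^sub>v y)"
proof -
  have "(M *\<^sub>v x) \<bullet>c y = (\<Sum>i<n. (\<Sum>j<m. M $$ (i,j) * x $ j) * cnj (y $ i))"
    using M x y by (simp add: scalar_prod_def lessThan_atLeast0)
  also have "\<dots> = (\<Sum>i<n. \<Sum>j<m. M $$ (i,j) * x $ j * cnj (y $ i))"
    by (simp add: sum_distrib_right)
  also have "\<dots> = (\<Sum>j<m. \<Sum>i<n. M $$ (i,j) * x $ j * cnj (y $ i))"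
    by (rule sum.swap)
  also have "\<dots> = (\<Sum>j<m. x $ j * cnj (\<Sum>i<n. cnj (M $$ (i,j)) * y $ i))"
    by (simp add: sum_distrib_left mult_ac)
  also have "\<dots> = x \<bullet>c (mat_adjoint M *\<^sub>v y)"
    using M x y by (simp add: scalar_prod_def lessThan_atLeast0)
  finally show ?thesis .
qed

lemma chol:
  fixes g :: "nat \<Rightarrow> nat \<Rightarrow> complex"
  assumes "\<forall>i<m. \<forall>j<m. g j i = cnj (g i j)"
    and "\<forall>x. (\<exists>i<m. x i \<noteq> 0) \<longrightarrow> Re (\<Sum>i<m. (\<Sum>j<m. g i j * x j) * cnj (x i)) > 0"
  shows "\<exists>u. (\<forall>i j. j < i \<longrightarrow> u i j = 0) \<and> (\<forall>i<m. u i i \<noteq> 0) \<and>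
     (\<forall>i<m. \<forall>j<m. g i j = (\<Sum>k<m. cnj (u k i) * u k j))"
  using assms
proof (induction m arbitrary: g)
  case 0
  show ?case by (rule exI[of _ "\<lambda>_ _. 0"], auto)
next
  case (Suc m)
  note herm = Suc.prems(1) and pos = Suc.prems(2)
  define a where "a = g 0 0"
  have eq0: "(\<Sum>i<Suc m. (\<Sum>j<Suc m. g i j * (if j = 0 then 1 else 0)) * cnj (if i = 0 then 1 else 0)) = g 0 0"
    by (simp only: sum.lessThan_Suc_shift, simp)
  have ex0: "\<exists>i<Suc m. (if i = 0 then 1 else 0 :: complex) \<noteq> 0" by auto
  note P0 = pos[rule_format, of "\<lambda>i. if i = 0 then 1 else 0", OF ex0]
  have "Re a > 0" using P0 unfolding eq0 a_def .
  have "a = cnj a" using herm[rule_format, of 0 0] unfolding a_def by simp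
  hence ca: "cnj a = a" by simp
  hence aR: "a = complex_of_real (Re a)" by (auto simp: complex_eq_iff)
  define s where "s = complex_of_real (sqrt (Re a))"
  have s0: "s \<noteq> 0" using \<open>Re a > 0\<close> unfolding s_def by simp
  have ss: "s * s = a"
  proof -
    have "sqrt (Re a) * sqrt (Re a) = Re a" using \<open>Re a > 0\<close> by simp
    hence "s * s = complex_of_real (Re a)" unfolding s_def by (metis of_real_mult)
    thus ?thesis using aR by simp
  qed
  have cs: "cnj s = s" unfolding s_def by simp
  have a0: "a \<noteq> 0" using \<open>Re a > 0\<close> by auto
  define g' where "g' i j = g (Suc i) (Suc j) - g (Suc i) 0 * g 0 (Suc j) / a" for i j
  have herm': "\<forall>i<m. \<forall>j<m. g' j i = cnj (g' i j)"
  proof (intro allI impI)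
    fix i j assume "i < m" "j < m"
    hence "g (Suc j) (Suc i) = cnj (g (Suc i) (Suc j))" "g (Suc j) 0 = cnj (g 0 (Suc j))"
      "g 0 (Suc i) = cnj (g (Suc i) 0)" using herm[rule_format, of "Suc i" "Suc j"] herm[rule_format, of "Suc j" 0]
         herm[rule_format, of "Suc i" 0] by auto
    thus "g' j i = cnj (g' i j)" unfolding g'_def using ca
      by (simp add: mult.commute)
  qed
  have pos': "\<forall>x. (\<exists>i<m. x i \<noteq> 0) \<longrightarrow> Re (\<Sum>i<m. (\<Sum>j<m. g' i j * x j) * cnj (x i)) > 0"
  proof (intro allI impI)
    fix x :: "nat \<Rightarrow> complex" assume ex: "\<exists>i<m. x i \<noteq> 0"
    define \<beta> where "\<beta> = (\<Sum>j<m. g 0 (Suc j) * x j)"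
    define X where "X k = (if k = 0 then - \<beta> / a else x (k - 1))" for k
    have "\<exists>i<Suc m. X i \<noteq> 0" using ex unfolding X_def by force
    note P = pos[rule_format, of X, OF this]
    have row: "(\<Sum>j<m. g' i j * x j) = (\<Sum>j<m. g (Suc i) (Suc j) * x j) - g (Suc i) 0 / a * \<beta>" for i
      unfolding g'_def \<beta>_def by (simp add: algebra_simps sum_subtractf sum_distrib_left sum_divide_distrib)
    have "(\<Sum>i<Suc m. (\<Sum>j<Suc m. g i j * X j) * cnj (X i))
        = (g 0 0 * X 0 + \<beta>) * cnj (X 0) + (\<Sum>i<m. (g (Suc i) 0 * X 0 + (\<Sum>j<m. g (Suc i) (Suc j) * x j)) * cnj (x i))"
      by (simp only: sum.lessThan_Suc_shift, simp add: X_def \<beta>_def)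
    also have "g 0 0 * X 0 + \<beta> = 0" using a0 unfolding X_def a_def by simp
    also have "(\<Sum>i<m. (g (Suc i) 0 * X 0 + (\<Sum>j<m. g (Suc i) (Suc j) * x j)) * cnj (x i))
       = (\<Sum>i<m. (\<Sum>j<m. g' i j * x j) * cnj (x i))"
      unfolding row X_def by (intro sum.cong refl, simp add: algebra_simps)
    finally show "Re (\<Sum>i<m. (\<Sum>j<m. g' i j * x j) * cnj (x i)) > 0" using P by simp
  qed
  from Suc.IH[OF herm' pos'] obtain u' where
    ut: "\<forall>i j. j < i \<longrightarrow> u' i j = 0" and ud: "\<forall>i<m. u' i i \<noteq> 0"
    and ue: "\<forall>i<m. \<forall>j<m. g' i j = (\<Sum>k<m. cnj (u' k i) * u' k j)" by blast
  define u where "u i j = (if i = 0 then (if j = 0 then s else g 0 j / s) else if j = 0 then 0 else u' (i-1) (j-1))" for i j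
  show ?case
  proof (intro exI[of _ u] conjI allI impI)
    fix i j :: nat assume "j < i" thus "u i j = 0" using ut unfolding u_def by auto
  next
    fix i assume "i < Suc m" thus "u i i \<noteq> 0" using ud s0 unfolding u_def by (cases i, auto)
  next
    fix i j assume i: "i < Suc m" and j: "j < Suc m"
    have S: "(\<Sum>k<Suc m. cnj (u k i) * u k j) = cnj (u 0 i) * u 0 j + (\<Sum>k<m. cnj (u (Suc k) i) * u (Suc k) j)"
      by (simp only: sum.lessThan_Suc_shift)
    show "g i j = (\<Sum>k<Suc m. cnj (u k i) * u k j)"
    proof (cases i)
      case 0 note i0 = this
      show ?thesis
      proof (cases j)
        case 0 thus ?thesis unfolding S using i0 cs ss by (simp add: u_def a_def)
      next
        case (Suc j') thus ?thesis unfolding S using i0 cs s0 by (simp add: u_def)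
      qed
    next
      case (Suc i') note iS = this
      have gi: "g i 0 = cnj (g 0 i)" using herm[rule_format, of 0 i] i by auto
      show ?thesis
      proof (cases j)
        case 0 thus ?thesis unfolding S using iS cs s0 gi by (simp add: u_def)
      next
        case (Suc j')
        have "(\<Sum>k<m. cnj (u (Suc k) i) * u (Suc k) j) = g' i' j'"
          using ue i j iS Suc by (simp add: u_def)
        moreover have "cnj (u 0 i) * u 0 j = g i 0 * g 0 j / a"
          using iS Suc gi cs s0 ss by (simp add: u_def field_simps)
        ultimately show ?thesis unfolding S using iS Suc by (simp add: g'_def)
      qed
    qed
  qed
qed

lemma mat_inv_props: assumes B: "B \<in> carrier_mat n n" and inv: "invertible_mat B"
  shows "mat_inv B \<in> carrier_mat n n" "B * mat_inv B = 1\<^sub>m n" "mat_inv B * B = 1\<^sub>m n"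
proof -
  from inv obtain C where "inverts_mat B C \<and> inverts_mat C B" unfolding invertible_mat_def by blast
  hence "inverts_mat B (mat_inv B) \<and> inverts_mat (mat_inv B) B"
    unfolding mat_inv_def by (rule someI)
  hence 1: "B * mat_inv B = 1\<^sub>m n" and 2: "mat_inv B * B = 1\<^sub>m (dim_row (mat_inv B))"
    using B unfolding inverts_mat_def by auto
  have "dim_col (mat_inv B) = n" using arg_cong[OF 1, of dim_col] by simp
  moreover have "dim_row (mat_inv B) = n" using arg_cong[OF 2, of dim_col] B by simp
  ultimately show C: "mat_inv B \<in> carrier_mat n n" by auto
  show "B * mat_inv B = 1\<^sub>m n" by fact
  show "mat_inv B * B = 1\<^sub>m n" using 2 C by simp
qed

lemma left_inv_invertible: assumes B: "B \<in> carrier_mat n n" and Z: "(Z::complex mat) \<in> carrier_mat n n"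
  and ZB: "Z * B = 1\<^sub>m n"
  shows "invertible_mat B"
proof -
  have "B * Z = 1\<^sub>m n" by (rule mat_mult_left_right_inverse[OF Z B ZB])
  thus ?thesis using B Z ZB unfolding invertible_mat_def inverts_mat_def square_mat.simps
    by (intro conjI exI[of _ Z], auto)
qed

lemma cnj_if01[simp]: "cnj (if P then 1 else 0) = (if P then 1 else (0::complex))" by simp

lemma sum_delta_r[simp]: "finite S \<Longrightarrow> (\<Sum>i\<in>S. f i * (if i = j then 1 else 0)) = (if j \<in> S then f j else (0::complex))"
  by (simp add: if_distrib[of "\<lambda>x. f _ * x"] sum.delta' cong: if_cong)
lemma sum_delta_r'[simp]: "finite S \<Longrightarrow> (\<Sum>i\<in>S. f i * (if j = i then 1 else 0)) = (if j \<in> S then f j else (0::complex))"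
  by (simp add: if_distrib[of "\<lambda>x. f _ * x"] sum.delta cong: if_cong)
lemma sum_delta_l[simp]: "finite S \<Longrightarrow> (\<Sum>i\<in>S. (if i = j then 1 else 0) * f i) = (if j \<in> S then f j else (0::complex))"
  by (simp add: if_distrib[of "\<lambda>x. x * f _"] sum.delta' cong: if_cong)
lemma sum_delta_l'[simp]: "finite S \<Longrightarrow> (\<Sum>i\<in>S. (if j = i then 1 else 0) * f i) = (if j \<in> S then f j else (0::complex))"
  by (simp add: if_distrib[of "\<lambda>x. x * f _"] sum.delta cong: if_cong)
lemma sum_delta_2[simp]: "finite S \<Longrightarrow> (\<Sum>i\<in>S. (if j = i then 1 else 0) * (if j = i then 1 else 0)) = (if j \<in> S then 1 else (0::complex))"
  by (simp add: if_distrib sum.delta cong: if_cong)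

lemma col_unit: assumes "(B::complex mat) \<in> carrier_mat n k" "j < k"
  shows "col B j = B *\<^sub>v unit_vec k j"
  using assms by (intro eq_vecI, auto simp: scalar_prod_def unit_vec_def)

lemma col_space_sub: assumes B: "B \<in> carrier_mat n k" and C: "C \<in> carrier_mat n m"
  and sub: "col_space B \<subseteq> col_space C"
  shows "\<exists>X \<in> carrier_mat m k. B = C * X"
proof -
  have "\<forall>j \<in> {..<k}. \<exists>x. x \<in> carrier_vec m \<and> col B j = C *\<^sub>v x"
  proof
    fix j assume "j \<in> {..<k}"
    hence "col B j \<in> col_space B" using B col_unit[OF B] unfolding col_space_def by auto
    with sub C show "\<exists>x. x \<in> carrier_vec m \<and> col B j = C *\<^sub>v x" unfolding col_space_def by auto
  qed
  then obtain f where f: "\<And>j. j < k \<Longrightarrow> f j \<in> carrier_vec m \<and> col B j = C *\<^sub>v f j"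
    by (metis lessThan_iff)
  define X where "X = mat m k (\<lambda>(i,j). f j $ i)"
  have "B = C * X"
  proof (rule eq_matI)
    fix i j assume i: "i < dim_row (C * X)" and j: "j < dim_col (C * X)"
    hence ij: "i < n" "j < k" using C unfolding X_def by auto
    have "col X j = f j" using f[OF ij(2)] ij unfolding X_def by (intro eq_vecI, auto)
    hence "(C * X) $$ (i,j) = (C *\<^sub>v f j) $ i" using ij C unfolding X_def by simp
    also have "\<dots> = B $$ (i,j)" using f[OF ij(2)] ij B by (metis carrier_matD index_col)
    finally show "B $$ (i,j) = (C * X) $$ (i,j)" by simp
  qed (insert B C, auto simp: X_def)
  thus ?thesis unfolding X_def by auto
qed

definition Jm :: "nat \<Rightarrow> nat \<Rightarrow> complex mat" where
  "Jm n k = mat n k (\<lambda>(i,j). if i = j then 1 else 0)"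

lemma Jm_carrier[simp]: "Jm n k \<in> carrier_mat n k" unfolding Jm_def by simp

lemma mult_Jm: assumes "M \<in> carrier_mat r n" "k \<le> n"
  shows "M * Jm n k = mat r k (\<lambda>(i,j). M $$ (i,j))"
  using assms by (intro eq_matI, auto simp: Jm_def scalar_prod_def if_distrib[of "\<lambda>x. _ * x"] sum.delta' cong: if_cong)

lemma Jm_adj_mult: assumes "M \<in> carrier_mat n r" "k \<le> n"
  shows "mat_adjoint (Jm n k) * M = mat k r (\<lambda>(i,j). M $$ (i,j))"
  using assms by (intro eq_matI, auto simp: Jm_def scalar_prod_def sum.delta cong: if_cong)

lemma Jm_adj_Jm: assumes "k \<le> n" shows "mat_adjoint (Jm n k) * Jm n k = 1\<^sub>m k"
  using assms by (subst Jm_adj_mult[of _ n k], auto simp: Jm_def)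

lemma first_cols_Jm: assumes "B \<in> carrier_mat n n" "k \<le> n" shows "first_cols B k = B * Jm n k"
  using assms by (subst mult_Jm[of _ n], auto simp: first_cols_def)

definition Em :: "nat \<Rightarrow> nat \<Rightarrow> complex mat" where
  "Em n k = mat_diag n (\<lambda>i. if i < k then 1 else 0)"

lemma Jm_Jm_adj: assumes "k \<le> n" shows "Jm n k * mat_adjoint (Jm n k) = Em n k"
  using assms by (intro eq_matI, auto simp: Jm_def Em_def mat_diag_def scalar_prod_def sum.delta cong: if_cong)

lemma Em_diag_comm: assumes D: "D \<in> carrier_mat n n" and dg: "diagonal_mat D"
  shows "Em n k * D = D * Em n k"
  using D dg unfolding Em_def
  by (subst mat_diag_mult_left[of _ n n], simp, subst mat_diag_mult_right[of _ n], simp,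
      intro eq_matI, auto simp: diagonal_mat_def)

lemma assoc': "dim_col A = dim_row B \<Longrightarrow> dim_col B = dim_row C \<Longrightarrow> (A::complex mat) * B * C = A * (B * C)"
  by (rule assoc_mult_mat[of A "dim_row A" "dim_col A" B "dim_col B" C "dim_col C"], auto)

lemma one_l': "dim_row M = k \<Longrightarrow> 1\<^sub>m k * (M::complex mat) = M" by auto
lemma one_r': "dim_col M = k \<Longrightarrow> (M::complex mat) * 1\<^sub>m k = M" by auto

lemma cancel': assumes "A * B = 1\<^sub>m k" "dim_col A = dim_row B" "dim_row M = dim_col B"
  shows "A * (B * (M::complex mat)) = M"
proof -
  have k: "dim_col B = k" using arg_cong[OF assms(1), of dim_col] by simp
  have "(A * B) * M = A * (B * M)" using assms by (intro assoc') auto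
  hence "A * (B * M) = 1\<^sub>m k * M" using assms(1) by simp
  thus ?thesis using assms k by simp
qed

lemma mult_cancel_1: assumes "A \<in> carrier_mat k n" "B \<in> carrier_mat n k" "A * B = 1\<^sub>m k" "(M::complex mat) \<in> carrier_mat k r"
  shows "A * (B * M) = M"
  using assms by (intro cancel'[of _ _ k], auto)

lemma proj_Vr:
  fixes A Vr Vl P R :: "complex mat"
  assumes A: "A \<in> carrier_mat n n" and iA: "invertible_mat A"
    and Vr: "Vr \<in> carrier_mat n n" and iVr: "invertible_mat Vr"
    and Vl: "Vl \<in> carrier_mat n n" and iVl: "invertible_mat Vl"
    and dg: "diagonal_mat (mat_adjoint Vl * A * Vr)"
    and nc: "nc \<le> n"
    and P: "P \<in> carrier_mat n nc" and R: "R \<in> carrier_mat n nc"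
    and cP: "col_space P = col_space (first_cols Vr nc)"
    and cR: "col_space R = col_space (first_cols Vl nc)"
  shows "proj_Pi A P R * Vr = Vr * Em n nc"
proof -
  define Vi where "Vi = mat_inv Vr"
  define Ai where "Ai = mat_inv A"
  define Vli where "Vli = mat_inv Vl"
  note Vi = mat_inv_props[OF Vr iVr, folded Vi_def]
  note Ai = mat_inv_props[OF A iA, folded Ai_def]
  note Vli = mat_inv_props[OF Vl iVl, folded Vli_def]
  define J where "J = Jm n nc"
  define Jh where "Jh = mat_adjoint J"
  define E where "E = Em n nc"
  have J: "J \<in> carrier_mat n nc" and Jh: "Jh \<in> carrier_mat nc n" and E: "E \<in> carrier_mat n n"
    unfolding J_def Jh_def E_def Em_def by auto
  have JhJ: "Jh * J = 1\<^sub>m nc" unfolding Jh_def J_def by (rule Jm_adj_Jm[OF nc])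
  have JJh: "J * Jh = E" unfolding Jh_def J_def E_def by (rule Jm_Jm_adj[OF nc])
  note dims0 = carrier_matD[OF A] carrier_matD[OF Vr] carrier_matD[OF Vl] carrier_matD[OF P] carrier_matD[OF R]
    carrier_matD[OF Vi(1)] carrier_matD[OF Ai(1)] carrier_matD[OF Vli(1)] carrier_matD[OF J] carrier_matD[OF Jh]
    carrier_matD[OF E]
  define D where "D = mat_adjoint Vl * A * Vr"
  have D: "D \<in> carrier_mat n n" unfolding D_def using Vl A Vr by auto
  have DD: "D = mat_adjoint Vl * (A * Vr)" unfolding D_def by (simp add: assoc' dims0)
  define Dinv where "Dinv = Vi * (Ai * mat_adjoint Vli)"
  have Dinv: "Dinv \<in> carrier_mat n n" unfolding Dinv_def using Vi Ai Vli by auto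
  have adjVV: "mat_adjoint Vli * mat_adjoint Vl = 1\<^sub>m n"
    using adj_mult[OF Vl Vli(1)] Vli by simp
  have DinvD: "Dinv * D = 1\<^sub>m n"
    unfolding Dinv_def DD by (simp add: assoc' dims0 cancel'[OF adjVV] cancel'[OF Ai(3)] Vi(3))
  have EDDE: "E * D = D * E" unfolding E_def by (rule Em_diag_comm[OF D dg[folded D_def]])
  have Vr1: "first_cols Vr nc = Vr * J" unfolding J_def by (rule first_cols_Jm[OF Vr nc])
  have Vl1: "first_cols Vl nc = Vl * J" unfolding J_def by (rule first_cols_Jm[OF Vl nc])
  have VrJ: "Vr * J \<in> carrier_mat n nc" using Vr J by auto
  have VlJ: "Vl * J \<in> carrier_mat n nc" using Vl J by auto
  obtain T where T: "T \<in> carrier_mat nc nc" and PT: "P = Vr * (J * T)"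
    using col_space_sub[OF P VrJ] cP Vr1 by (auto simp: assoc' dims0)
  obtain X where X: "X \<in> carrier_mat nc nc" and VX: "Vr * J = P * X"
    using col_space_sub[OF VrJ P] cP Vr1 by auto
  obtain S where S: "S \<in> carrier_mat nc nc" and RS: "R = Vl * (J * S)"
    using col_space_sub[OF R VlJ] cR Vl1 by (auto simp: assoc' dims0)
  obtain Y where Y: "Y \<in> carrier_mat nc nc" and VY: "Vl * J = R * Y"
    using col_space_sub[OF VlJ R] cR Vl1 by auto
  note dims1 = dims0 carrier_matD[OF T] carrier_matD[OF X] carrier_matD[OF S] carrier_matD[OF Y]
    carrier_matD[OF D] carrier_matD[OF Dinv]
  have TX: "T * X = 1\<^sub>m nc"
  proof -
    have "T * X = Jh * (Vi * (Vr * (J * (T * X))))"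
      by (simp add: dims1 cancel'[OF Vi(3)] cancel'[OF JhJ])
    also have "Vr * (J * (T * X)) = P * X" unfolding PT by (simp add: assoc' dims1)
    also have "P * X = Vr * J" using VX by simp
    finally show ?thesis by (simp add: dims1 cancel'[OF Vi(3)] JhJ)
  qed
  have XT: "X * T = 1\<^sub>m nc" by (rule mat_mult_left_right_inverse[OF T X TX])
  have SY: "S * Y = 1\<^sub>m nc"
  proof -
    have "S * Y = Jh * (Vli * (Vl * (J * (S * Y))))"
      by (simp add: dims1 cancel'[OF Vli(3)] cancel'[OF JhJ])
    also have "Vl * (J * (S * Y)) = R * Y" unfolding RS by (simp add: assoc' dims1)
    also have "R * Y = Vl * J" using VY by simp
    finally show ?thesis by (simp add: dims1 cancel'[OF Vli(3)] JhJ)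
  qed
  define D11 where "D11 = Jh * (D * J)"
  define D11i where "D11i = Jh * (Dinv * J)"
  have D11: "D11 \<in> carrier_mat nc nc" and D11i: "D11i \<in> carrier_mat nc nc"
    unfolding D11_def D11i_def using Jh D Dinv J by auto
  note dims2 = dims1 carrier_matD[OF D11] carrier_matD[OF D11i]
  have EDJ: "E * (D * J) = D * (E * J)" using EDDE by (simp add: assoc'[symmetric] dims1)
  have D11iD11: "D11i * D11 = 1\<^sub>m nc"
  proof -
    have "D11i * D11 = Jh * (Dinv * ((J * Jh) * (D * J)))"
      unfolding D11i_def D11_def by (simp add: assoc' dims1)
    also have "\<dots> = Jh * (Dinv * (D * (E * J)))" unfolding JJh EDJ ..
    also have "\<dots> = Jh * (E * J)" by (simp add: dims1 cancel'[OF DinvD])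
    also have "\<dots> = 1\<^sub>m nc" unfolding JJh[symmetric] by (simp add: dims1 assoc' cancel'[OF JhJ] JhJ)
    finally show ?thesis .
  qed
  have JhD: "Jh * D = D11 * Jh"
  proof -
    have "D11 * Jh = Jh * (D * E)" unfolding D11_def JJh[symmetric] by (simp add: assoc' dims1)
    also have "\<dots> = Jh * (E * D)" using EDDE by simp
    also have "\<dots> = Jh * D" unfolding JJh[symmetric] by (simp add: assoc' dims1 cancel'[OF JhJ])
    finally show ?thesis by simp
  qed
  have Rh: "mat_adjoint R = mat_adjoint S * (Jh * mat_adjoint Vl)"
    unfolding RS Jh_def using adj_mult[OF Vl, of "J * S" nc] adj_mult[OF J S] Vl J S by (simp add: assoc' dims1)
  define C where "C = mat_adjoint R * A * P"
  have C: "C \<in> carrier_mat nc nc" unfolding C_def using R A P by auto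
  have CC: "C = mat_adjoint S * (D11 * T)"
  proof -
    have "C = mat_adjoint S * (Jh * (mat_adjoint Vl * (A * (Vr * (J * T)))))"
      unfolding C_def Rh PT by (simp add: assoc' dims1)
    also have "mat_adjoint Vl * (A * (Vr * (J * T))) = D * (J * T)"
      unfolding DD by (simp add: assoc' dims1)
    finally show ?thesis unfolding D11_def by (simp add: assoc' dims1)
  qed
  define Z where "Z = X * (D11i * mat_adjoint Y)"
  have Z: "Z \<in> carrier_mat nc nc" unfolding Z_def using X D11i Y by auto
  have YS: "mat_adjoint Y * mat_adjoint S = 1\<^sub>m nc" using adj_mult[OF S Y] SY by simp
  have ZC: "Z * C = 1\<^sub>m nc"
    unfolding Z_def CC by (simp add: assoc' dims2 cancel'[OF YS] cancel'[OF D11iD11] XT)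
  have iC: "invertible_mat C" by (rule left_inv_invertible[OF C Z ZC])
  define K where "K = mat_inv C"
  note K = mat_inv_props[OF C iC, folded K_def]
  note dims3 = dims2 carrier_matD[OF C] carrier_matD[OF K(1)]
  have CX: "C * X = mat_adjoint S * D11"
    unfolding CC by (simp add: assoc' dims2 TX one_r')
  have "proj_Pi A P R * Vr = P * (K * (mat_adjoint R * (A * Vr)))"
    unfolding proj_Pi_def K_def[symmetric] C_def[symmetric] by (simp add: assoc' dims3)
  also have "mat_adjoint R * (A * Vr) = mat_adjoint S * (D11 * Jh)"
    unfolding Rh JhD[symmetric] DD by (simp add: assoc' dims3)
  also have "\<dots> = C * (X * Jh)"
  proof -
    have "C * (X * Jh) = (C * X) * Jh" by (simp add: assoc' dims3)
    thus ?thesis unfolding CX by (simp add: assoc' dims3)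
  qed
  also have "K * (C * (X * Jh)) = X * Jh" by (simp add: dims3 cancel'[OF K(3)])
  also have "P * (X * Jh) = Vr * E" unfolding JJh[symmetric] by (simp add: assoc'[symmetric] dims3 VX)
  finally show ?thesis unfolding E_def .
qed

lemma quad_form: assumes "(G::complex mat) \<in> carrier_mat n n" "a \<in> carrier_vec n" "b \<in> carrier_vec n"
  shows "(G *\<^sub>v a) \<bullet>c b = (\<Sum>i<n. \<Sum>j<n. G $$ (i,j) * a $ j * cnj (b $ i))"
  using assms by (simp add: scalar_prod_def lessThan_atLeast0 sum_distrib_right)

lemma Em_vec_index: assumes "a \<in> carrier_vec n" "j < n"
  shows "(Em n k *\<^sub>v a) $ j = (if j < k then a $ j else 0)"
  using assms by (simp add: Em_def mat_diag_def scalar_prod_def if_distrib[of "\<lambda>x. x * _"] sum.delta sum.delta' cong: if_cong)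

lemma Em_dims[simp]: "dim_row (Em n k) = n" "dim_col (Em n k) = n" by (auto simp: Em_def mat_diag_def)

lemma Em_unit: assumes "j < n"
  shows "Em n k *\<^sub>v unit_vec n j = (if j < k then unit_vec n j else 0\<^sub>v n)"
  using assms by (intro eq_vecI, auto simp: Em_vec_index simp del: index_mult_mat_vec)

lemma mult_unit_col: assumes "(M::complex mat) \<in> carrier_mat n n" "j < n"
  shows "M *\<^sub>v unit_vec n j = col M j"
  using col_unit[OF assms] by simp

lemma sprod_unit: assumes "(v::complex vec) \<in> carrier_vec n" "i < n"
  shows "v \<bullet>c unit_vec n i = v $ i"
  using assms by (simp add: scalar_prod_def)

lemma sum_trunc: fixes k n :: nat assumes "k \<le> n" "\<And>j. k \<le> j \<Longrightarrow> j < n \<Longrightarrow> f j = 0"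
  shows "(\<Sum>j<n. f j) = (\<Sum>j<k. (f j :: complex))"
proof (rule sum.mono_neutral_right)
  show "\<forall>i\<in>{..<n} - {..<k}. f i = 0"
  proof
    fix i assume "i \<in> {..<n} - {..<k}" thus "f i = 0" by (intro assms(2)) auto
  qed
qed (insert assms(1), auto)

lemma sum_shift: fixes k n :: nat assumes "k \<le> n" "\<And>j. j < k \<Longrightarrow> f j = 0"
  shows "(\<Sum>j<n. f j) = (\<Sum>j<n-k. (f (j + k) :: complex))"
proof -
  have "(\<Sum>j<n. f j) = sum f {0..<k} + sum f {k..<n}"
    using assms(1) by (simp add: sum.atLeastLessThan_concat lessThan_atLeast0)
  also have "sum f {0..<k} = 0" using assms(2) by simp
  also have "sum f {k..<n} = sum f {0+k..<(n-k)+k}" using assms(1) by simp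
  also have "\<dots> = (\<Sum>j=0..<n-k. f (j + k))" by (rule sum.shift_bounds_nat_ivl)
  finally show ?thesis by (simp add: lessThan_atLeast0)
qed

lemma orth_iff:
  fixes N Vr Pi :: "complex mat"
  assumes N: "N \<in> carrier_mat n n" and Vr: "Vr \<in> carrier_mat n n" and iVr: "invertible_mat Vr"
    and Pi: "Pi \<in> carrier_mat n n" and PV: "Pi * Vr = Vr * Em n nc"
  shows "N_orthogonal n N Pi \<longleftrightarrow>
     (\<forall>i<n. \<forall>j<n. (i < nc) \<noteq> (j < nc) \<longrightarrow> (mat_adjoint Vr * N * Vr) $$ (i,j) = 0)"
proof -
  define G where "G = mat_adjoint Vr * N * Vr"
  define E where "E = Em n nc"
  have G: "G \<in> carrier_mat n n" unfolding G_def using Vr N by auto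
  have E: "E \<in> carrier_mat n n" unfolding E_def Em_def by auto
  have gen: "(N *\<^sub>v (Vr *\<^sub>v u)) \<bullet>c (Vr *\<^sub>v b) = (G *\<^sub>v u) \<bullet>c b"
    if u: "u \<in> carrier_vec n" and b: "b \<in> carrier_vec n" for u b
  proof -
    have "(N *\<^sub>v (Vr *\<^sub>v u)) \<bullet>c (Vr *\<^sub>v b) = (N *\<^sub>v (Vr *\<^sub>v u)) \<bullet>c (mat_adjoint (mat_adjoint Vr) *\<^sub>v b)"
      by simp
    also have "\<dots> = (mat_adjoint Vr *\<^sub>v (N *\<^sub>v (Vr *\<^sub>v u))) \<bullet>c b"
      by (rule adj_vec[symmetric], insert Vr N u b, auto)
    also have "mat_adjoint Vr *\<^sub>v (N *\<^sub>v (Vr *\<^sub>v u)) = G *\<^sub>v u"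
    proof -
      have 1: "(mat_adjoint Vr * N * Vr) *\<^sub>v u = (mat_adjoint Vr * N) *\<^sub>v (Vr *\<^sub>v u)"
        by (rule assoc_mult_mat_vec, insert Vr N u, auto)
      have 2: "(mat_adjoint Vr * N) *\<^sub>v (Vr *\<^sub>v u) = mat_adjoint Vr *\<^sub>v (N *\<^sub>v (Vr *\<^sub>v u))"
        by (rule assoc_mult_mat_vec, insert Vr N u, auto)
      show ?thesis unfolding G_def using 1 2 by simp
    qed
    finally show ?thesis .
  qed
  have PiV: "Pi *\<^sub>v (Vr *\<^sub>v a) = Vr *\<^sub>v (E *\<^sub>v a)" if a: "a \<in> carrier_vec n" for a
  proof -
    have "Pi *\<^sub>v (Vr *\<^sub>v a) = (Pi * Vr) *\<^sub>v a" using Pi Vr a by (simp add: assoc_mult_mat_vec[of _ n n _ n a])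
    also have "\<dots> = Vr *\<^sub>v (E *\<^sub>v a)" unfolding PV E_def[symmetric] using Vr E a by (simp add: assoc_mult_mat_vec[of _ n n _ n a])
    finally show ?thesis .
  qed
  have F1: "N_inner N (Pi *\<^sub>v (Vr *\<^sub>v a)) (Vr *\<^sub>v b) = (G *\<^sub>v (E *\<^sub>v a)) \<bullet>c b"
    if "a \<in> carrier_vec n" "b \<in> carrier_vec n" for a b
    unfolding N_inner_def PiV[OF that(1)] using that E by (intro gen, auto)
  have F2: "N_inner N (Vr *\<^sub>v a) (Pi *\<^sub>v (Vr *\<^sub>v b)) = (G *\<^sub>v a) \<bullet>c (E *\<^sub>v b)"
    if "a \<in> carrier_vec n" "b \<in> carrier_vec n" for a b
    unfolding N_inner_def PiV[OF that(2)] using that E by (intro gen, auto)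
  define Vi where "Vi = mat_inv Vr"
  note Vi = mat_inv_props[OF Vr iVr, folded Vi_def]
  show ?thesis unfolding G_def[symmetric]
  proof
    assume orth: "N_orthogonal n N Pi"
    show "\<forall>i<n. \<forall>j<n. (i < nc) \<noteq> (j < nc) \<longrightarrow> G $$ (i,j) = 0"
    proof (intro allI impI)
      fix i j assume i: "i < n" and j: "j < n" and ij: "(i < nc) \<noteq> (j < nc)"
      have "N_inner N (Pi *\<^sub>v (Vr *\<^sub>v unit_vec n j)) (Vr *\<^sub>v unit_vec n i) =
            N_inner N (Vr *\<^sub>v unit_vec n j) (Pi *\<^sub>v (Vr *\<^sub>v unit_vec n i))"
        using orth Vr unfolding N_orthogonal_def by auto
      hence eq: "(G *\<^sub>v (E *\<^sub>v unit_vec n j)) \<bullet>c unit_vec n i = (G *\<^sub>v unit_vec n j) \<bullet>c (E *\<^sub>v unit_vec n i)"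
        using F1 F2 by simp
      have Gj: "G *\<^sub>v unit_vec n j = col G j" by (rule mult_unit_col[OF G j])
      have Gji: "col G j $ i = G $$ (i,j)" using G i j by simp
      have Gu: "G *\<^sub>v unit_vec n j \<in> carrier_vec n" using G by auto
      have G0: "G *\<^sub>v 0\<^sub>v n = 0\<^sub>v n" using G by auto
      show "G $$ (i,j) = 0"
      proof (cases "j < nc")
        case True
        hence "i \<ge> nc" using ij by auto
        hence "(G *\<^sub>v unit_vec n j) \<bullet>c unit_vec n i = 0"
          using eq True i j Gu unfolding E_def by (simp add: Em_unit)
        thus ?thesis using sprod_unit[of "col G j" n i] G i Gj Gji Gu by simp
      next
        case False
        hence "i < nc" using ij by auto
        hence "(G *\<^sub>v unit_vec n j) \<bullet>c unit_vec n i = 0"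
          using eq False i j Gu G0 unfolding E_def by (simp add: Em_unit)
        thus ?thesis using sprod_unit[of "col G j" n i] G i Gj Gji Gu by simp
      qed
    qed
  next
    assume BD: "\<forall>i<n. \<forall>j<n. (i < nc) \<noteq> (j < nc) \<longrightarrow> G $$ (i,j) = 0"
    show "N_orthogonal n N Pi" unfolding N_orthogonal_def
    proof (intro ballI)
      fix x y :: "complex vec" assume x: "x \<in> carrier_vec n" and y: "y \<in> carrier_vec n"
      define a where "a = Vi *\<^sub>v x"
      define b where "b = Vi *\<^sub>v y"
      have a: "a \<in> carrier_vec n" and b: "b \<in> carrier_vec n" unfolding a_def b_def using Vi x y by auto
      have xa: "x = Vr *\<^sub>v a" unfolding a_def using Vi Vr x
        by (simp add: assoc_mult_mat_vec[of _ n n _ n x, symmetric])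
      have yb: "y = Vr *\<^sub>v b" unfolding b_def using Vi Vr y
        by (simp add: assoc_mult_mat_vec[of _ n n _ n y, symmetric])
      have "(G *\<^sub>v (E *\<^sub>v a)) \<bullet>c b = (\<Sum>i<n. \<Sum>j<n. G $$ (i,j) * (E *\<^sub>v a) $ j * cnj (b $ i))"
        by (rule quad_form[OF G _ b], insert E a, auto)
      also have "\<dots> = (\<Sum>i<n. \<Sum>j<n. G $$ (i,j) * a $ j * cnj ((E *\<^sub>v b) $ i))"
      proof (intro sum.cong refl)
        fix i j assume "i \<in> {..<n}" "j \<in> {..<n}"
        hence i: "i < n" and j: "j < n" by auto
        show "G $$ (i,j) * (E *\<^sub>v a) $ j * cnj (b $ i) = G $$ (i,j) * a $ j * cnj ((E *\<^sub>v b) $ i)"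
          unfolding E_def Em_vec_index[OF a j] Em_vec_index[OF b i] using BD i j by auto
      qed
      also have "\<dots> = (G *\<^sub>v a) \<bullet>c (E *\<^sub>v b)"
        by (rule quad_form[symmetric, OF G a], insert E b, auto)
      finally show "N_inner N (Pi *\<^sub>v x) y = N_inner N x (Pi *\<^sub>v y)"
        unfolding xa yb using F1[OF a b] F2[OF a b] by simp
    qed
  qed
qed

lemma ut_invertible: assumes M: "(M::complex mat) \<in> carrier_mat n n" and ut: "upper_triangular M"
  and d: "\<And>i. i < n \<Longrightarrow> M $$ (i,i) \<noteq> 0"
  shows "invertible_mat M"
proof -
  have "0 \<notin> set (diag_mat M)" using d M unfolding diag_mat_def by auto
  hence "det M \<noteq> 0" using upper_triangular_imp_det_eq_0_iff[OF M ut] by simp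
  from det_non_zero_imp_unit[OF M this, of undefined]
  obtain Q where Q: "Q \<in> carrier_mat n n" and "Q * M = 1\<^sub>m n" "M * Q = 1\<^sub>m n"
    unfolding Units_def ring_mat_def by auto
  thus ?thesis using M unfolding invertible_mat_def inverts_mat_def by auto
qed

lemma four_idx: assumes U: "Ucc \<in> carrier_mat nc nc" and F: "Uff \<in> carrier_mat (n - nc) (n - nc)"
  and nc: "nc \<le> n" and i: "i < n" and j: "j < n"
  shows "four_block_mat Ucc (0\<^sub>m nc (n - nc)) (0\<^sub>m (n - nc) nc) Uff $$ (i,j) =
    (if i < nc then if j < nc then Ucc $$ (i,j) else 0 else if j < nc then 0 else Uff $$ (i - nc, j - nc))"
  using U F nc i j by (subst index_mat_four_block, auto)

lemma four_carrier: assumes U: "Ucc \<in> carrier_mat nc nc" and F: "Uff \<in> carrier_mat (n - nc) (n - nc)"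
  and nc: "nc \<le> n"
  shows "four_block_mat Ucc (0\<^sub>m nc (n - nc)) (0\<^sub>m (n - nc) nc) Uff \<in> carrier_mat n n"
  using U F nc by (auto simp: four_block_mat_def)

lemma adj_mult_idx: assumes "(M::complex mat) \<in> carrier_mat n n" "i < n" "j < n"
  shows "(mat_adjoint M * M) $$ (i,j) = (\<Sum>k<n. cnj (M $$ (k,i)) * M $$ (k,j))"
  using assms by (simp add: scalar_prod_def lessThan_atLeast0)

lemma block_BD:
  fixes Ucc Uff :: "complex mat"
  assumes U: "Ucc \<in> carrier_mat nc nc" and F: "Uff \<in> carrier_mat (n - nc) (n - nc)" and nc: "nc \<le> n"
  defines "Dt \<equiv> four_block_mat Ucc (0\<^sub>m nc (n - nc)) (0\<^sub>m (n - nc) nc) Uff"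
  shows "\<forall>i<n. \<forall>j<n. (i < nc) \<noteq> (j < nc) \<longrightarrow> (mat_adjoint Dt * Dt) $$ (i,j) = 0"
proof (intro allI impI)
  fix i j assume i: "i < n" and j: "j < n" and ij: "(i < nc) \<noteq> (j < nc)"
  have Dt: "Dt \<in> carrier_mat n n" unfolding Dt_def by (rule four_carrier[OF U F nc])
  have "(mat_adjoint Dt * Dt) $$ (i,j) = (\<Sum>k<n. cnj (Dt $$ (k,i)) * Dt $$ (k,j))"
    by (rule adj_mult_idx[OF Dt i j])
  also have "\<dots> = (\<Sum>k<n. 0)"
  proof (rule sum.cong[OF refl])
    fix k assume "k \<in> {..<n}" hence k: "k < n" by auto
    show "cnj (Dt $$ (k,i)) * Dt $$ (k,j) = 0"
      unfolding Dt_def four_idx[OF U F nc k i] four_idx[OF U F nc k j] using ij by auto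
  qed
  finally show "(mat_adjoint Dt * Dt) $$ (i,j) = 0" by simp
qed

lemma chol_block:
  fixes G :: "complex mat"
  assumes G: "G \<in> carrier_mat n n" and herm: "\<And>i j. i < n \<Longrightarrow> j < n \<Longrightarrow> G $$ (j,i) = cnj (G $$ (i,j))"
    and pos: "\<And>v. v \<in> carrier_vec n \<Longrightarrow> v \<noteq> 0\<^sub>v n \<Longrightarrow> Re ((G *\<^sub>v v) \<bullet>c v) > 0"
    and nc: "nc \<le> n"
    and BD: "\<forall>i<n. \<forall>j<n. (i < nc) \<noteq> (j < nc) \<longrightarrow> G $$ (i,j) = 0"
  shows "\<exists>Ucc Uff. Ucc \<in> carrier_mat nc nc \<and> Uff \<in> carrier_mat (n - nc) (n - nc) \<and>
       upper_triangular Ucc \<and> upper_triangular Uff \<and>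
       invertible_mat (four_block_mat Ucc (0\<^sub>m nc (n - nc)) (0\<^sub>m (n - nc) nc) Uff) \<and>
       mat_adjoint (four_block_mat Ucc (0\<^sub>m nc (n - nc)) (0\<^sub>m (n - nc) nc) Uff) *
         four_block_mat Ucc (0\<^sub>m nc (n - nc)) (0\<^sub>m (n - nc) nc) Uff = G"
proof -
  define gc where "gc i j = G $$ (i,j)" for i j
  define gf where "gf i j = G $$ (i + nc, j + nc)" for i j
  have hc: "\<forall>i<nc. \<forall>j<nc. gc j i = cnj (gc i j)"
  proof (intro allI impI)
    fix i j assume "i < nc" "j < nc" thus "gc j i = cnj (gc i j)" unfolding gc_def by (intro herm) (use nc in auto)
  qed
  have hf: "\<forall>i<n-nc. \<forall>j<n-nc. gf j i = cnj (gf i j)"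
  proof (intro allI impI)
    fix i j assume "i < n-nc" "j < n-nc" thus "gf j i = cnj (gf i j)" unfolding gf_def by (intro herm) (use nc in auto)
  qed
  have pc: "\<forall>x. (\<exists>i<nc. x i \<noteq> 0) \<longrightarrow> Re (\<Sum>i<nc. (\<Sum>j<nc. gc i j * x j) * cnj (x i)) > 0"
  proof (intro allI impI)
    fix x :: "nat \<Rightarrow> complex" assume ex: "\<exists>i<nc. x i \<noteq> 0"
    define v where "v = vec n (\<lambda>i. if i < nc then x i else 0)"
    have v: "v \<in> carrier_vec n" unfolding v_def by simp
    have "v \<noteq> 0\<^sub>v n"
    proof
      assume v0: "v = 0\<^sub>v n"
      from ex obtain i where i: "i < nc" "x i \<noteq> 0" by auto
      have "v $ i = x i" using i nc unfolding v_def by auto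
      with v0 i nc show False by auto
    qed
    with pos v have P: "Re ((G *\<^sub>v v) \<bullet>c v) > 0" by auto
    have "(G *\<^sub>v v) \<bullet>c v = (\<Sum>i<n. \<Sum>j<n. G $$ (i,j) * v $ j * cnj (v $ i))" by (rule quad_form[OF G v v])
    also have "\<dots> = (\<Sum>i<n. \<Sum>j<n. G $$ (i,j) * (if j < nc then x j else 0) * cnj (if i < nc then x i else 0))"
      by (intro sum.cong refl, auto simp: v_def)
    also have "\<dots> = (\<Sum>i<nc. \<Sum>j<n. G $$ (i,j) * (if j < nc then x j else 0) * cnj (if i < nc then x i else 0))"
      by (rule sum_trunc[OF nc], simp)
    also have "\<dots> = (\<Sum>i<nc. \<Sum>j<nc. G $$ (i,j) * (if j < nc then x j else 0) * cnj (if i < nc then x i else 0))"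
      by (intro sum.cong refl sum_trunc[OF nc], simp)
    also have "\<dots> = (\<Sum>i<nc. (\<Sum>j<nc. gc i j * x j) * cnj (x i))"
      unfolding gc_def by (intro sum.cong refl, auto simp: sum_distrib_right)
    finally show "Re (\<Sum>i<nc. (\<Sum>j<nc. gc i j * x j) * cnj (x i)) > 0" using P by simp
  qed
  have pf: "\<forall>x. (\<exists>i<n-nc. x i \<noteq> 0) \<longrightarrow> Re (\<Sum>i<n-nc. (\<Sum>j<n-nc. gf i j * x j) * cnj (x i)) > 0"
  proof (intro allI impI)
    fix x :: "nat \<Rightarrow> complex" assume ex: "\<exists>i<n-nc. x i \<noteq> 0"
    define v where "v = vec n (\<lambda>i. if nc \<le> i then x (i - nc) else 0)"
    have v: "v \<in> carrier_vec n" unfolding v_def by simp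
    have "v \<noteq> 0\<^sub>v n"
    proof
      assume v0: "v = 0\<^sub>v n"
      from ex obtain i where i: "i < n - nc" "x i \<noteq> 0" by auto
      have "v $ (i + nc) = x i" using i unfolding v_def by auto
      with v0 i show False by auto
    qed
    with pos v have P: "Re ((G *\<^sub>v v) \<bullet>c v) > 0" by auto
    have "(G *\<^sub>v v) \<bullet>c v = (\<Sum>i<n. \<Sum>j<n. G $$ (i,j) * v $ j * cnj (v $ i))" by (rule quad_form[OF G v v])
    also have "\<dots> = (\<Sum>i<n. \<Sum>j<n. G $$ (i,j) * (if nc \<le> j then x (j - nc) else 0) * cnj (if nc \<le> i then x (i - nc) else 0))"
      by (intro sum.cong refl, auto simp: v_def)
    also have "\<dots> = (\<Sum>i<n-nc. \<Sum>j<n. G $$ (i+nc, j) * (if nc \<le> j then x (j-nc) else 0) * cnj (x i))"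
      by (rule trans[OF sum_shift[OF nc]], simp, intro sum.cong refl, simp)
    also have "\<dots> = (\<Sum>i<n-nc. \<Sum>j<n-nc. G $$ (i + nc, j + nc) * x j * cnj (x i))"
      by (rule sum.cong[OF refl], rule trans[OF sum_shift[OF nc]], simp, intro sum.cong refl, simp)
    also have "\<dots> = (\<Sum>i<n-nc. (\<Sum>j<n-nc. gf i j * x j) * cnj (x i))"
      unfolding gf_def by (intro sum.cong refl, auto simp: sum_distrib_right)
    finally show "Re (\<Sum>i<n-nc. (\<Sum>j<n-nc. gf i j * x j) * cnj (x i)) > 0" using P by simp
  qed
  obtain uc where uct: "\<forall>i j. j < i \<longrightarrow> uc i j = 0" and ucd: "\<forall>i<nc. uc i i \<noteq> 0"
    and uce: "\<forall>i<nc. \<forall>j<nc. gc i j = (\<Sum>k<nc. cnj (uc k i) * uc k j)"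
    using chol[OF hc pc] by blast
  obtain uf where uft: "\<forall>i j. j < i \<longrightarrow> uf i j = 0" and ufd: "\<forall>i<n-nc. uf i i \<noteq> 0"
    and ufe: "\<forall>i<n-nc. \<forall>j<n-nc. gf i j = (\<Sum>k<n-nc. cnj (uf k i) * uf k j)"
    using chol[OF hf pf] by blast
  define Ucc where "Ucc = mat nc nc (\<lambda>(i,j). uc i j)"
  define Uff where "Uff = mat (n - nc) (n - nc) (\<lambda>(i,j). uf i j)"
  define Dt where "Dt = four_block_mat Ucc (0\<^sub>m nc (n - nc)) (0\<^sub>m (n - nc) nc) Uff"
  have U: "Ucc \<in> carrier_mat nc nc" and F: "Uff \<in> carrier_mat (n - nc) (n - nc)"
    unfolding Ucc_def Uff_def by auto
  have Dt: "Dt \<in> carrier_mat n n" unfolding Dt_def by (rule four_carrier[OF U F nc])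
  have utU: "upper_triangular Ucc" unfolding Ucc_def upper_triangular_def using uct by auto
  have utF: "upper_triangular Uff" unfolding Uff_def upper_triangular_def using uft by auto
  have DtI: "Dt $$ (i,j) = (if i < nc then if j < nc then uc i j else 0 else if j < nc then 0 else uf (i - nc) (j - nc))"
    if "i < n" "j < n" for i j
    unfolding Dt_def four_idx[OF U F nc that] using that unfolding Ucc_def Uff_def by auto
  have utD: "upper_triangular Dt" unfolding Dt_def
    by (rule upper_triangular_four_block[OF U F utU utF])
  have invD: "invertible_mat Dt"
    by (rule ut_invertible[OF Dt utD], insert ucd ufd, auto simp: DtI)
  have DD: "mat_adjoint Dt * Dt = G"
  proof (rule eq_matI)
    fix i j assume "i < dim_row G" "j < dim_col G"
    hence i: "i < n" and j: "j < n" using G by auto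
    have e: "(mat_adjoint Dt * Dt) $$ (i,j) = (\<Sum>k<n. cnj (Dt $$ (k,i)) * Dt $$ (k,j))"
      by (rule adj_mult_idx[OF Dt i j])
    show "(mat_adjoint Dt * Dt) $$ (i,j) = G $$ (i,j)"
    proof (cases "(i < nc) = (j < nc)")
      case False
      thus ?thesis using block_BD[OF U F nc, folded Dt_def] BD i j by auto
    next
      case True
      show ?thesis
      proof (cases "i < nc")
        case ic: True
        hence jc: "j < nc" using True by auto
        have "(\<Sum>k<n. cnj (Dt $$ (k,i)) * Dt $$ (k,j)) = (\<Sum>k<nc. cnj (Dt $$ (k,i)) * Dt $$ (k,j))"
          by (rule sum_trunc[OF nc], insert ic i, auto simp: DtI)
        also have "\<dots> = (\<Sum>k<nc. cnj (uc k i) * uc k j)"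
          by (intro sum.cong refl, insert ic jc nc, auto simp: DtI)
        also have "\<dots> = G $$ (i,j)" using uce ic jc unfolding gc_def by auto
        finally show ?thesis using e by simp
      next
        case ic: False
        hence jc: "\<not> j < nc" using True by auto
        have "(\<Sum>k<n. cnj (Dt $$ (k,i)) * Dt $$ (k,j)) = (\<Sum>k<n-nc. cnj (Dt $$ (k+nc,i)) * Dt $$ (k+nc,j))"
          by (rule sum_shift[OF nc], insert ic i nc, auto simp: DtI)
        also have "\<dots> = (\<Sum>k<n-nc. cnj (uf k (i-nc)) * uf k (j-nc))"
          by (intro sum.cong refl, insert ic jc i j nc, auto simp: DtI)
        also have "\<dots> = gf (i-nc) (j-nc)" using ufe ic jc i j by auto
        also have "\<dots> = G $$ (i,j)" unfolding gf_def using ic jc by auto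
        finally show ?thesis using e by simp
      qed
    qed
  qed (insert Dt G, auto)
  show ?thesis
    by (intro exI[of _ Ucc] exI[of _ Uff], insert U F utU utF invD DD, auto simp: Dt_def)
qed

theorem theorem3p1:
  fixes n nc :: nat and A M Vr Vl P R N :: "complex mat" and lam :: "nat \<Rightarrow> complex"
  assumes A: "A \<in> carrier_mat n n" and "invertible_mat A"
    and M: "M \<in> carrier_mat n n" and "invertible_mat M"
    and "diagonalizable (mat_inv M * A)"
    and "diagonalizable (mat_inv (mat_adjoint M) * mat_adjoint A)"
    and Vr: "Vr \<in> carrier_mat n n" and "invertible_mat Vr"
    and Vl: "Vl \<in> carrier_mat n n" and "invertible_mat Vl"
    and "A * Vr = M * Vr * mat_diag n lam"
    and "mat_adjoint Vl * A = mat_diag n lam * mat_adjoint Vl * M"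
    and "diagonal_mat (mat_adjoint Vl * A * Vr)"
    and "diagonal_mat (mat_adjoint Vl * M * Vr)"
    and "\<And>i j. i \<le> j \<Longrightarrow> j < n \<Longrightarrow> cmod (1 - lam j) \<le> cmod (1 - lam i)"
    and "1 \<le> nc" and "nc \<le> n"
    and P: "P \<in> carrier_mat n nc" and R: "R \<in> carrier_mat n nc"
    and "col_space P = col_space (first_cols Vr nc)"
    and "col_space R = col_space (first_cols Vl nc)"
    and "hpd n N"
  shows "N_orthogonal n N (proj_Pi A P R) \<longleftrightarrow>
    (\<exists>Ucc Uff. Ucc \<in> carrier_mat nc nc \<and> Uff \<in> carrier_mat (n - nc) (n - nc) \<and>
       upper_triangular Ucc \<and> upper_triangular Uff \<and>
       (let Dt = four_block_mat Ucc (0\<^sub>m nc (n - nc)) (0\<^sub>m (n - nc) nc) Uff in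
         invertible_mat Dt \<and>
         N = mat_adjoint (mat_inv Vr) * mat_adjoint Dt * Dt * mat_inv Vr))"
proof -
  note nc = \<open>nc \<le> n\<close>
  note iA = \<open>invertible_mat A\<close> and iVr = \<open>invertible_mat Vr\<close> and iVl = \<open>invertible_mat Vl\<close>
  have PV: "proj_Pi A P R * Vr = Vr * Em n nc"
    by (rule proj_Vr[OF A iA Vr iVr Vl iVl \<open>diagonal_mat (mat_adjoint Vl * A * Vr)\<close> nc P R
      \<open>col_space P = col_space (first_cols Vr nc)\<close> \<open>col_space R = col_space (first_cols Vl nc)\<close>])
  have Pi: "proj_Pi A P R \<in> carrier_mat n n" unfolding proj_Pi_def using P A by (intro carrier_matI, auto)
  have N: "N \<in> carrier_mat n n" and Nh: "mat_adjoint N = N"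
    and Npos: "\<And>x. x \<in> carrier_vec n \<Longrightarrow> x \<noteq> 0\<^sub>v n \<Longrightarrow> Re ((N *\<^sub>v x) \<bullet>c x) > 0"
    using \<open>hpd n N\<close> unfolding hpd_def by auto
  define G where "G = mat_adjoint Vr * N * Vr"
  define Vi where "Vi = mat_inv Vr"
  note Vi = mat_inv_props[OF Vr iVr, folded Vi_def]
  have G: "G \<in> carrier_mat n n" unfolding G_def using Vr N by auto
  note dims = carrier_matD[OF Vr] carrier_matD[OF N] carrier_matD[OF Vi(1)] carrier_matD[OF G]
  have orth: "N_orthogonal n N (proj_Pi A P R) \<longleftrightarrow>
     (\<forall>i<n. \<forall>j<n. (i < nc) \<noteq> (j < nc) \<longrightarrow> G $$ (i,j) = 0)"
    unfolding G_def by (rule orth_iff[OF N Vr iVr Pi PV])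
  have VrVi: "mat_adjoint Vr * mat_adjoint Vi = 1\<^sub>m n" using adj_mult[OF Vi(1) Vr] Vi(3) by simp
  have ViVr: "mat_adjoint Vi * mat_adjoint Vr = 1\<^sub>m n" using adj_mult[OF Vr Vi(1)] Vi(2) by simp
  have GN: "mat_adjoint Vi * G * Vi = N"
    unfolding G_def by (simp add: assoc' dims cancel'[OF ViVr] Vi(2) one_r')
  have Gh: "mat_adjoint G = G"
  proof -
    have VN: "mat_adjoint Vr * N \<in> carrier_mat n n" using Vr N by auto
    show ?thesis
    unfolding G_def using adj_mult[OF VN Vr] adj_mult[OF _ N, of "mat_adjoint Vr" n] Vr N Nh
    by (simp add: assoc' dims)
  qed
  have herm: "G $$ (j,i) = cnj (G $$ (i,j))" if "i < n" "j < n" for i j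
  proof -
    have "mat_adjoint G $$ (j,i) = cnj (G $$ (i,j))" using that G by simp
    thus ?thesis unfolding Gh .
  qed
  have pos: "Re ((G *\<^sub>v v) \<bullet>c v) > 0" if v: "v \<in> carrier_vec n" "v \<noteq> 0\<^sub>v n" for v
  proof -
    have 1: "G *\<^sub>v v = mat_adjoint Vr *\<^sub>v (N *\<^sub>v (Vr *\<^sub>v v))"
    proof -
      have a: "(mat_adjoint Vr * N * Vr) *\<^sub>v v = (mat_adjoint Vr * N) *\<^sub>v (Vr *\<^sub>v v)"
        by (rule assoc_mult_mat_vec, insert Vr N v, auto)
      have b: "(mat_adjoint Vr * N) *\<^sub>v (Vr *\<^sub>v v) = mat_adjoint Vr *\<^sub>v (N *\<^sub>v (Vr *\<^sub>v v))"
        by (rule assoc_mult_mat_vec, insert Vr N v, auto)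
      show ?thesis unfolding G_def using a b by simp
    qed
    have "(G *\<^sub>v v) \<bullet>c v = (N *\<^sub>v (Vr *\<^sub>v v)) \<bullet>c (mat_adjoint (mat_adjoint Vr) *\<^sub>v v)"
      unfolding 1 by (rule adj_vec, insert Vr N v, auto)
    hence 2: "(G *\<^sub>v v) \<bullet>c v = (N *\<^sub>v (Vr *\<^sub>v v)) \<bullet>c (Vr *\<^sub>v v)" by simp
    have "Vr *\<^sub>v v \<noteq> 0\<^sub>v n"
    proof
      assume "Vr *\<^sub>v v = 0\<^sub>v n"
      hence "Vi *\<^sub>v (Vr *\<^sub>v v) = 0\<^sub>v n" using Vi by auto
      moreover have "Vi *\<^sub>v (Vr *\<^sub>v v) = v" using Vi Vr v
        by (simp add: assoc_mult_mat_vec[of Vi n n Vr n v, symmetric])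
      ultimately show False using v by simp
    qed
    thus ?thesis unfolding 2 using Npos Vr v by auto
  qed
  show ?thesis unfolding orth Let_def
  proof
    assume BD: "\<forall>i<n. \<forall>j<n. (i < nc) \<noteq> (j < nc) \<longrightarrow> G $$ (i,j) = 0"
    from chol_block[OF G herm pos nc BD] obtain Ucc Uff where
      U: "Ucc \<in> carrier_mat nc nc" and F: "Uff \<in> carrier_mat (n - nc) (n - nc)"
      and ut: "upper_triangular Ucc" "upper_triangular Uff"
      and inv: "invertible_mat (four_block_mat Ucc (0\<^sub>m nc (n - nc)) (0\<^sub>m (n - nc) nc) Uff)"
      and DD: "mat_adjoint (four_block_mat Ucc (0\<^sub>m nc (n - nc)) (0\<^sub>m (n - nc) nc) Uff) *
         four_block_mat Ucc (0\<^sub>m nc (n - nc)) (0\<^sub>m (n - nc) nc) Uff = G" by blast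
    define Dt where "Dt = four_block_mat Ucc (0\<^sub>m nc (n - nc)) (0\<^sub>m (n - nc) nc) Uff"
    have Dt: "Dt \<in> carrier_mat n n" unfolding Dt_def by (rule four_carrier[OF U F nc])
    have "mat_adjoint Vi * mat_adjoint Dt * Dt * Vi = mat_adjoint Vi * (mat_adjoint Dt * Dt) * Vi"
      using Dt by (simp add: assoc' dims carrier_matD[OF Dt])
    also have "\<dots> = N" using DD GN unfolding Dt_def by simp
    finally have "N = mat_adjoint Vi * mat_adjoint Dt * Dt * Vi" by simp
    thus "\<exists>Ucc Uff. Ucc \<in> carrier_mat nc nc \<and> Uff \<in> carrier_mat (n - nc) (n - nc) \<and>
       upper_triangular Ucc \<and> upper_triangular Uff \<and>
       invertible_mat (four_block_mat Ucc (0\<^sub>m nc (n - nc)) (0\<^sub>m (n - nc) nc) Uff) \<and>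
       N = mat_adjoint (mat_inv Vr) * mat_adjoint (four_block_mat Ucc (0\<^sub>m nc (n - nc)) (0\<^sub>m (n - nc) nc) Uff) *
         four_block_mat Ucc (0\<^sub>m nc (n - nc)) (0\<^sub>m (n - nc) nc) Uff * mat_inv Vr"
      using U F ut inv unfolding Dt_def Vi_def by blast
  next
    assume "\<exists>Ucc Uff. Ucc \<in> carrier_mat nc nc \<and> Uff \<in> carrier_mat (n - nc) (n - nc) \<and>
       upper_triangular Ucc \<and> upper_triangular Uff \<and>
       invertible_mat (four_block_mat Ucc (0\<^sub>m nc (n - nc)) (0\<^sub>m (n - nc) nc) Uff) \<and>
       N = mat_adjoint (mat_inv Vr) * mat_adjoint (four_block_mat Ucc (0\<^sub>m nc (n - nc)) (0\<^sub>m (n - nc) nc) Uff) *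
         four_block_mat Ucc (0\<^sub>m nc (n - nc)) (0\<^sub>m (n - nc) nc) Uff * mat_inv Vr"
    then obtain Ucc Uff where U: "Ucc \<in> carrier_mat nc nc" and F: "Uff \<in> carrier_mat (n - nc) (n - nc)"
      and NN: "N = mat_adjoint Vi * mat_adjoint (four_block_mat Ucc (0\<^sub>m nc (n - nc)) (0\<^sub>m (n - nc) nc) Uff) *
         four_block_mat Ucc (0\<^sub>m nc (n - nc)) (0\<^sub>m (n - nc) nc) Uff * Vi"
      unfolding Vi_def by blast
    define Dt where "Dt = four_block_mat Ucc (0\<^sub>m nc (n - nc)) (0\<^sub>m (n - nc) nc) Uff"
    have Dt: "Dt \<in> carrier_mat n n" unfolding Dt_def by (rule four_carrier[OF U F nc])
    have "G = mat_adjoint Vr * (mat_adjoint Vi * (mat_adjoint Dt * (Dt * (Vi * Vr))))"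
      unfolding G_def NN Dt_def[symmetric] by (simp add: assoc' dims carrier_matD[OF Dt])
    also have "\<dots> = mat_adjoint Dt * Dt"
      by (simp add: cancel'[OF VrVi] Vi(3) dims carrier_matD[OF Dt] one_r')
    finally have GD: "G = mat_adjoint Dt * Dt" .
    show "\<forall>i<n. \<forall>j<n. (i < nc) \<noteq> (j < nc) \<longrightarrow> G $$ (i,j) = 0"
      unfolding GD Dt_def by (rule block_BD[OF U F nc])
  qed
qed

end
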